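(* Let $0<c<1$. There exists a set $A\subseteq\mathbb{N}$ such that $R_A(n)=cn+O(\sqrt{n}\log^{1/2}n)$ as $n\to\infty$.
   Context: $\mathbb{N}$ denotes the set of non-negative integers. For $A\subseteq\mathbb{N}$, $R_A(n)$ denotes the number of ordered pairs $(a,a')$ with $a,a'\in A$ and $a+a'=n$. *)

theory Defs
  imports "HOL-Analysis.Analysis" "HOL-Library.Landau_Symbols"
begin

definition rep_count :: "nat set \<Rightarrow> nat \<Rightarrow> nat" where
  "rep_count A n = card {(a, a'). a \<in> A \<and> a' \<in> A \<and> a + a' = n}"

end

theory Submission
  imports Defs "HOL-Probability.Probability"
begin

lemma rep_count_alt: "rep_count A n = card {a. a \<le> n \<and> a \<in> A \<and> n - a \<in> A}"
proof -
  have "{(a, a'). a \<in> A \<and> a' \<in> A \<and> a + a' = n} = (\<lambda>a. (a, n - a)) ` {a. a \<le> n \<and> a \<in> A \<and> n - a \<in> A}"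
    by (force simp: image_iff)
  moreover have "inj_on (\<lambda>a. (a, n - a)) X" for X by (auto simp: inj_on_def)
  ultimately show ?thesis unfolding rep_count_def by (simp add: card_image)
qed

lemma card_split:
  fixes P :: "nat \<Rightarrow> bool"
  shows "card {a. a \<le> n \<and> P a \<and> P (n - a)} = 2 * card {a. 2*a < n \<and> P a \<and> P (n - a)} + (if even n \<and> P (n div 2) then 1 else 0)"
proof -
  define L where "L = {a. 2*a < n \<and> P a \<and> P (n - a)}"
  define U where "U = {a. a \<le> n \<and> n < 2*a \<and> P a \<and> P (n - a)}"
  define Mi where "Mi = {a. 2*a = n \<and> P a \<and> P (n - a)}"
  have eq: "{a. a \<le> n \<and> P a \<and> P (n - a)} = L \<union> U \<union> Mi" by (auto simp: L_def U_def Mi_def)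
  have fL: "finite L" unfolding L_def by (rule finite_subset[of _ "{..n}"]) auto
  have fU: "finite U" unfolding U_def by (rule finite_subset[of _ "{..n}"]) auto
  have fM: "finite Mi" unfolding Mi_def by (rule finite_subset[of _ "{..n}"]) auto
  have UL: "U = (\<lambda>a. n - a) ` L"
  proof
    show "U \<subseteq> (\<lambda>a. n - a) ` L"
    proof
      fix a assume "a \<in> U"
      then have "n - a \<in> L" "a = n - (n - a)" by (auto simp: U_def L_def)
      then show "a \<in> (\<lambda>a. n - a) ` L" by blast
    qed
    show "(\<lambda>a. n - a) ` L \<subseteq> U" by (auto simp: U_def L_def)
  qed
  have "inj_on (\<lambda>a. n - a) L" by (auto simp: inj_on_def L_def)
  hence cU: "card U = card L" using UL card_image by blast
  have cM: "card Mi = (if even n \<and> P (n div 2) then 1 else 0)"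
  proof (cases "even n \<and> P (n div 2)")
    case True
    then have "Mi = {n div 2}" by (auto simp: Mi_def)
    then show ?thesis using True by simp
  next
    case False
    then have "Mi = {}" by (auto simp: Mi_def)
    then show ?thesis using False by simp
  qed
  have d1: "L \<inter> U = {}" "(L \<union> U) \<inter> Mi = {}" by (auto simp: L_def U_def Mi_def)
  have "card (L \<union> U \<union> Mi) = card L + card U + card Mi"
    using fL fU fM d1 by (simp add: card_Un_disjoint)
  then show ?thesis using eq cU cM by (simp add: L_def)
qed

lemma indep_coords:
  fixes N :: "'a measure"
  assumes N: "prob_space N" and J: "finite J" "J \<noteq> {}"
  shows "prob_space.indep_vars (PiM UNIV (\<lambda>_::nat. N)) (\<lambda>_. N) (\<lambda>i \<omega>. \<omega> i) J"
proof -
  interpret product_prob_space "\<lambda>_::nat. N" UNIV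
    using N by (rule product_prob_spaceI)
  interpret P: prob_space "PiM UNIV (\<lambda>_::nat. N)"
    using N by (intro prob_space_PiM)
  have d1: "distr (PiM UNIV (\<lambda>_::nat. N)) (PiM J (\<lambda>_. N)) (\<lambda>x. \<lambda>i\<in>J. x i) = PiM J (\<lambda>_. N)"
    using distr_PiM_restrict_finite[of J] J by (simp add: restrict_def)
  have d2: "PiM J (\<lambda>i. distr (PiM UNIV (\<lambda>_::nat. N)) N (\<lambda>\<omega>. \<omega> i)) = PiM J (\<lambda>_. N)"
    by (intro PiM_cong refl) (simp add: PiM_component)
  show ?thesis
    by (subst P.indep_vars_iff_distr_eq_PiM') (use J d1 d2 in auto)
qed


lemma main_prob:
  fixes p :: real and n :: nat and e :: real
  assumes p: "0 \<le> p" "p \<le> 1" and n: "n \<ge> 1" and e: "e \<ge> 0"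
  shows "measure (PiM UNIV (\<lambda>_::nat. measure_pmf (bernoulli_pmf p)))
     {\<omega>\<in>space (PiM UNIV (\<lambda>_::nat. measure_pmf (bernoulli_pmf p))).
        \<bar>(\<Sum>i\<in>{i. 2*i < n}. of_bool (\<omega> i \<and> \<omega> (n - i)) :: real) - real (card {i. 2*i < n}) * p^2\<bar> \<ge> e}
     \<le> 2 * exp (-2 * e^2 / real (card {i::nat. 2*i < n}))"
proof -
  define N where "N = measure_pmf (bernoulli_pmf p)"
  define M where "M = PiM UNIV (\<lambda>_::nat. N)"
  define I where "I = {i::nat. 2*i < n}"
  define X where "X = (\<lambda>i (\<omega>::nat \<Rightarrow> bool). of_bool (\<omega> i \<and> \<omega> (n - i)) :: real)"
  define K where "K = (\<lambda>i::nat. {i, n - i})"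
  have NP: "prob_space N" unfolding N_def by (rule measure_pmf.prob_space_axioms)
  interpret P: prob_space M unfolding M_def using NP by (intro prob_space_PiM)
  interpret PP: product_prob_space "\<lambda>_::nat. N" UNIV
    using NP by (rule product_prob_spaceI)
  have finI: "finite I" unfolding I_def by (rule finite_subset[of _ "{..n}"]) auto
  have I0: "0 \<in> I" using n by (simp add: I_def)
  have ind0: "P.indep_vars (\<lambda>_. N) (\<lambda>i \<omega>. \<omega> i) {..n}"
    unfolding M_def by (rule indep_coords[OF NP]) auto
  have ind1: "P.indep_vars (\<lambda>j. PiM (K j) (\<lambda>_. N)) (\<lambda>j \<omega>. restrict (\<lambda>i. \<omega> i) (K j)) I"
  proof (rule P.indep_vars_restrict[OF ind0])
    show "K j \<subseteq> {..n}" if "j \<in> I" for j using that by (auto simp: K_def I_def)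
    show "disjoint_family_on K I"
      unfolding disjoint_family_on_def K_def I_def by auto
  qed
  have measY: "(\<lambda>f. of_bool (f j \<and> f (n - j)) :: real) \<in> borel_measurable (PiM (K j) (\<lambda>_. N))" for j
  proof -
    have "j \<in> K j" "n - j \<in> K j" by (auto simp: K_def)
    then show ?thesis unfolding N_def by measurable
  qed
  have ind2: "P.indep_vars (\<lambda>_. borel) (\<lambda>j \<omega>. (\<lambda>f. of_bool (f j \<and> f (n - j)) :: real) (restrict (\<lambda>i. \<omega> i) (K j))) I"
    by (rule P.indep_vars_compose2[OF ind1 measY])
  have ind: "P.indep_vars (\<lambda>_. borel) X I"
    using ind2 by (subst (asm) P.indep_vars_cong[of I I _ X]) (auto simp: X_def K_def)
  interpret H: Hoeffding_ineq M I X "\<lambda>_. 0" "\<lambda>_. 1" "\<Sum>i\<in>I. P.expectation (X i)"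
  proof unfold_locales
    show "finite I" by (rule finI)
    show "P.indep_vars (\<lambda>_. borel) X I" by (rule ind)
    fix i assume "i \<in> I"
    show "AE x in M. X i x \<in> {0..1}" by (simp add: X_def)
  qed
  have EX: "P.expectation (X i) = p^2" if "i \<in> I" for i
  proof -
    have ne: "i \<noteq> n - i" using that by (auto simp: I_def)
    have spM: "space M = UNIV" by (simp add: M_def space_PiM N_def)
    have "X i = indicator {\<omega>\<in>space M. \<forall>j\<in>{i, n-i}. \<omega> j \<in> {True}}"
      by (rule ext) (simp add: X_def spM indicator_def)
    moreover have "{\<omega>\<in>space M. \<forall>j\<in>{i, n-i}. \<omega> j \<in> {True}} \<inter> space M = {\<omega>\<in>space M. \<forall>j\<in>{i, n-i}. \<omega> j \<in> {True}}"
      by blast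
    ultimately have "P.expectation (X i) = measure M {\<omega>\<in>space M. \<forall>j\<in>{i, n-i}. \<omega> j \<in> {True}}"
      by (simp add: M_def)
    also have "\<dots> = p^2"
    proof -
      have "emeasure M {\<omega>\<in>space M. \<forall>j\<in>{i, n-i}. \<omega> j \<in> {True}} = (\<Prod>j\<in>{i, n-i}. emeasure N {True})"
        unfolding M_def by (rule PP.emeasure_PiM_Collect) (auto simp: N_def)
      also have "\<dots> = ennreal (p^2)"
        using ne p by (simp add: N_def measure_pmf.emeasure_eq_measure measure_pmf_single power2_eq_square ennreal_mult)
      finally show ?thesis using p by (simp add: P.emeasure_eq_measure)
    qed
    finally show ?thesis .
  qed
  have mu: "(\<Sum>i\<in>I. P.expectation (X i)) = real (card I) * p^2"
    using EX by simp
  have pos: "(\<Sum>i\<in>I. (1 - 0::real)\<^sup>2) > 0" using finI I0 by (simp add: card_gt_0_iff) blast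
  have "P.prob {x\<in>space M. \<bar>(\<Sum>i\<in>I. X i x) - (\<Sum>i\<in>I. P.expectation (X i))\<bar> \<ge> e} \<le> 2 * exp (-2 * e\<^sup>2 / (\<Sum>i\<in>I. (1 - 0::real)\<^sup>2))"
    by (rule H.Hoeffding_ineq_abs_ge[OF e pos])
  then show ?thesis unfolding mu by (simp add: M_def N_def I_def X_def)
qed


lemma det_bound:
  fixes \<omega> :: "nat \<Rightarrow> bool" and c :: real and n :: nat
  assumes c: "0 \<le> c" "c \<le> 1" and n: "n \<ge> 3"
  and h: "\<not> (\<bar>(\<Sum>i\<in>{i. 2*i<n}. of_bool (\<omega> i \<and> \<omega> (n-i)) :: real) - real (card {i::nat. 2*i<n}) * c\<bar> \<ge> 2 * sqrt (real n * ln (real n)))"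
  shows "\<bar>real (rep_count {i. \<omega> i} n) - c * real n\<bar> \<le> 6 * (sqrt (real n) * sqrt (ln (real n)))"
proof -
  define C where "C = card {a. 2*a < n \<and> \<omega> a \<and> \<omega> (n - a)}"
  define d :: nat where "d = (if even n \<and> \<omega> (n div 2) then 1 else 0)"
  have fin: "finite {i::nat. 2*i<n}" by (rule finite_subset[of _ "{..n}"]) auto
  have "{i. 2*i<n} \<inter> {i. \<omega> i \<and> \<omega> (n-i)} = {a. 2*a < n \<and> \<omega> a \<and> \<omega> (n - a)}" by auto
  then have S: "(\<Sum>i\<in>{i. 2*i<n}. of_bool (\<omega> i \<and> \<omega> (n-i)) :: real) = real C"
    using fin by (simp add: C_def)
  have R: "rep_count {i. \<omega> i} n = 2 * C + d"
    unfolding rep_count_alt C_def d_def using card_split[of n \<omega>] by simp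
  have d01: "real d \<le> 1" "real d \<ge> 0" by (auto simp: d_def)
  have "{i::nat. 2*i<n} = {..<(n+1) div 2}" by auto
  then have m: "card {i::nat. 2*i<n} = (n+1) div 2" by simp
  have m2: "real n \<le> 2 * real ((n+1) div 2)" "2 * real ((n+1) div 2) \<le> real n + 1"
    by linarith+
  have "exp 1 \<le> (3::real)" using exp_le by simp
  also have "\<dots> \<le> real n" using n by simp
  finally have "ln (exp 1) \<le> ln (real n)" using n by (subst ln_le_cancel_iff) auto
  then have ln1: "ln (real n) \<ge> 1" by simp
  define q where "q = sqrt (real n) * sqrt (ln (real n))"
  have a1: "1 \<le> sqrt (real n)" using n by simp
  have b1: "1 \<le> sqrt (ln (real n))" using ln1 by simp
  have "1 * 1 \<le> sqrt (real n) * sqrt (ln (real n))"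
    by (rule mult_mono[OF a1 b1]) auto
  then have q1: "q \<ge> 1" by (simp add: q_def)
  have hq: "\<bar>real C - real ((n+1) div 2) * c\<bar> < 2 * q"
    using h S m by (simp add: q_def real_sqrt_mult)
  have "real (rep_count {i. \<omega> i} n) - c * real n = real d + 2 * (real C - real ((n+1) div 2) * c) + c * (2 * real ((n+1) div 2) - real n)"
    using R by (simp add: algebra_simps)
  moreover have "0 \<le> c * (2 * real ((n+1) div 2) - real n)" "c * (2 * real ((n+1) div 2) - real n) \<le> 1"
    using m2 c by (auto intro: mult_nonneg_nonneg mult_le_one)
  ultimately have "\<bar>real (rep_count {i. \<omega> i} n) - c * real n\<bar> \<le> 2 + 4 * q" (is ?G)
  proof -
    assume e1: "real (rep_count {i. \<omega> i} n) - c * real n = real d + 2 * (real C - real ((n+1) div 2) * c) + c * (2 * real ((n+1) div 2) - real n)"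
      and e2: "0 \<le> c * (2 * real ((n+1) div 2) - real n)" "c * (2 * real ((n+1) div 2) - real n) \<le> 1"
    have h1: "real C - real ((n+1) div 2) * c < 2 * q" "-(2*q) < real C - real ((n+1) div 2) * c"
      using hq by (simp_all add: abs_less_iff)
    have gen: "\<And>x u t dd qq :: real. x = dd + 2 * u + t \<Longrightarrow> 0 \<le> t \<Longrightarrow> t \<le> 1 \<Longrightarrow> u < 2 * qq \<Longrightarrow> -(2*qq) < u \<Longrightarrow> dd \<le> 1 \<Longrightarrow> 0 \<le> dd \<Longrightarrow> \<bar>x\<bar> \<le> 2 + 4 * qq"
      by linarith
    show ?thesis
      by (rule gen[OF e1 e2 h1 d01])
  qed
  then show ?thesis using q1 by (simp add: q_def)
qed


theorem theorem12:
  fixes c :: real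
  assumes "0 < c" and "c < 1"
  shows "\<exists>A :: nat set.
           (\<lambda>n. real (rep_count A n) - c * real n)
             \<in> O(\<lambda>n. sqrt (real n) * sqrt (ln (real n)))"
proof -
  define p where "p = sqrt c"
  have p: "0 \<le> p" "p \<le> 1" "p^2 = c" using assms by (auto simp: p_def)
  define M where "M = PiM UNIV (\<lambda>_::nat. measure_pmf (bernoulli_pmf p))"
  interpret P: prob_space M unfolding M_def by (intro prob_space_PiM measure_pmf.prob_space_axioms)
  define S where "S = (\<lambda>(n::nat) (\<omega>::nat \<Rightarrow> bool). (\<Sum>i\<in>{i. 2*i < n}. of_bool (\<omega> i \<and> \<omega> (n - i)) :: real))"
  define B where "B = (\<lambda>k. {\<omega>\<in>space M. \<bar>S (k+3) \<omega> - real (card {i::nat. 2*i < k+3}) * p^2\<bar> \<ge> 2 * sqrt (real (k+3) * ln (real (k+3)))})"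
  have Bm: "B k \<in> sets M" for k
    unfolding B_def S_def M_def by measurable
  have Bb: "measure M (B k) \<le> 1 / (8 * (real k + 1)^2)" for k
  proof -
    define n where "n = k + 3"
    define m where "m = card {i::nat. 2*i < n}"
    define e where "e = 2 * sqrt (real n * ln (real n))"
    have "{i::nat. 2*i < n} \<subseteq> {..<n}" by auto
    then have mn: "m \<le> n" unfolding m_def by (metis card_lessThan card_mono finite_lessThan)
    have "0 \<in> {i::nat. 2*i < n}" by (simp add: n_def)
    moreover have "finite {i::nat. 2*i < n}" by (rule finite_subset[of _ "{..n}"]) auto
    ultimately have m1: "m \<ge> 1" unfolding m_def by (metis One_nat_def Suc_leI card_gt_0_iff empty_iff)
    have lnn: "ln (real n) \<ge> 0" by (simp add: n_def)
    have e0: "e \<ge> 0" using lnn by (simp add: e_def)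
    have "measure M (B k) \<le> 2 * exp (-2 * e^2 / real m)"
      using main_prob[OF p(1,2), of n e] e0
      by (simp add: B_def S_def M_def n_def m_def e_def)
    also have "e^2 = 4 * (real n * ln (real n))"
      using lnn by (simp add: e_def power_mult_distrib)
    also have "-2 * (4 * (real n * ln (real n))) / real m \<le> -8 * ln (real n)"
    proof -
      have "real n * ln (real n) \<ge> real m * ln (real n)"
        using mn lnn by (intro mult_right_mono) auto
      then show ?thesis using m1 by (simp add: field_simps)
    qed
    then have "2 * exp (-2 * (4 * (real n * ln (real n))) / real m) \<le> 2 * exp (-8 * ln (real n))"
      by simp
    also have "exp (-8 * ln (real n)) = 1 / real n ^ 8"
    proof -
      have np: "real n > 0" by (simp add: n_def)
      have "8 * ln (real n) = ln (real n ^ 8)" using ln_realpow[of "real n" 8] by simp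
      then have "exp (8 * ln (real n)) = real n ^ 8" using np by simp
      then show ?thesis by (simp add: exp_minus field_simps)
    qed
    also have "2 * (1 / real n ^ 8) \<le> 1 / (8 * (real k + 1)^2)"
    proof -
      have "(k+1)^2 \<le> (k+3::nat)^2" by (intro power_mono) auto
      moreover have "16 \<le> (k+3::nat)^6"
      proof -
        have "(3::nat)^6 \<le> (k+3)^6" by (intro power_mono) auto
        then show ?thesis by simp
      qed
      ultimately have "(k+1)^2 * 16 \<le> (k+3::nat)^2 * (k+3)^6" by (rule mult_le_mono)
      then have "16 * (k+1)^2 \<le> (k+3::nat)^8" by (simp add: power_add[symmetric] mult.commute)
      then have "16 * (real k+1)^2 \<le> real n^8" unfolding n_def
        by (metis (mono_tags, lifting) of_nat_1 of_nat_add of_nat_le_iff of_nat_mult of_nat_numeral of_nat_power)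
      then show ?thesis by (simp add: field_simps n_def)
    qed
    finally show ?thesis .
  qed
  have gs: "(\<lambda>k. 1 / (8 * (real k + 1)^2)) sums (1/8 * (pi^2 / 6))"
  proof -
    have "(\<lambda>k. 1 / (real k + 1)^2) sums (pi^2 / 6)" using inverse_squares_sums by (simp add: add.commute)
    from sums_mult[OF this, of "1/8"] show ?thesis by simp
  qed
  have summ: "summable (\<lambda>k. measure M (B k))"
    by (rule summable_comparison_test[OF _ sums_summable[OF gs]]) (use Bb in auto)
  have "measure M (\<Union>k. B k) \<le> (\<Sum>k. measure M (B k))"
    by (rule P.finite_measure_subadditive_countably) (use Bm summ in auto)
  also have "\<dots> \<le> (\<Sum>k. 1 / (8 * (real k + 1)^2))"
    by (rule suminf_le[OF Bb summ sums_summable[OF gs]])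
  also have "\<dots> = 1/8 * (pi^2 / 6)" using gs sums_unique by metis
  also have "\<dots> < 1"
  proof -
    have "pi^2 < 4^2" using pi_less_4 pi_gt_zero by (intro power_strict_mono) auto
    then show ?thesis by simp
  qed
  finally have lt: "measure M (\<Union>k. B k) < 1" .
  have "\<exists>\<omega>\<in>space M. \<omega> \<notin> (\<Union>k. B k)"
  proof (rule ccontr)
    assume "\<not> ?thesis"
    then have "space M \<subseteq> (\<Union>k. B k)" by blast
    then have "measure M (space M) \<le> measure M (\<Union>k. B k)"
      using Bm by (intro P.finite_measure_mono) auto
    then show False using lt P.prob_space by simp
  qed
  then obtain \<omega> where \<omega>: "\<omega> \<in> space M" "\<And>k. \<omega> \<notin> B k" by blast
  have bound: "\<bar>real (rep_count {i. \<omega> i} n) - c * real n\<bar> \<le> 6 * (sqrt (real n) * sqrt (ln (real n)))"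
    if n: "n \<ge> 3" for n
  proof (rule det_bound)
    show "0 \<le> c" "c \<le> 1" using assms by auto
    show "n \<ge> 3" by fact
    have "\<omega> \<notin> B (n - 3)" by (rule \<omega>(2))
    then show "\<not> (\<bar>(\<Sum>i\<in>{i. 2*i<n}. of_bool (\<omega> i \<and> \<omega> (n-i)) :: real) - real (card {i::nat. 2*i<n}) * c\<bar> \<ge> 2 * sqrt (real n * ln (real n)))"
      using n \<omega>(1) p(3) by (simp add: B_def S_def)
  qed
  show ?thesis
  proof (intro exI bigoI)
    show "eventually (\<lambda>n. norm (real (rep_count {i. \<omega> i} n) - c * real n) \<le> 6 * norm (sqrt (real n) * sqrt (ln (real n)))) at_top"
      unfolding eventually_at_top_linorder
    proof (intro exI allI impI)
      fix n :: nat assume n: "n \<ge> 3"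
      have "ln (real n) \<ge> 0" using n by simp
      then have "norm (sqrt (real n) * sqrt (ln (real n))) = sqrt (real n) * sqrt (ln (real n))" by simp
      then show "norm (real (rep_count {i. \<omega> i} n) - c * real n) \<le> 6 * norm (sqrt (real n) * sqrt (ln (real n)))"
        using bound[OF n] by simp
    qed
  qed
qed

end
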